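(* Let $\delta\in(0,\tfrac12)$ and $0<\epsilon<1-h(\delta)$. For $m\ge1$ let $r^*(m,\epsilon):=\min\{r: \binom{m}{\le r}/2^m\ge 1-\frac{h(\delta)}{1-\epsilon}\}$. Then: (1) $r^*(m,\epsilon)\le r(m,\epsilon)$ for every $m$; (2) $\lim_{m\to\infty}\binom{m}{\le r^*(m,\epsilon)}/2^m=1-\frac{h(\delta)}{1-\epsilon}$; (3) there is a constant $C(\epsilon)$ (depending on $\epsilon$ and $\delta$) such that $r^*(m,\epsilon)=\frac m2+C(\epsilon)\sqrt m+o(\sqrt m)$ as $m\to\infty$.
   Context: $h(\delta)=-\delta\log_2\delta-(1-\delta)\log_2(1-\delta)$ and $\binom{m}{\le r}=\sum_{i=0}^r\binom{m}{i}$. Every function $\mathbb{F}_2^m\to\mathbb{F}_2$ is uniquely a multilinear polynomial $\sum_{S\subseteq[m]}c_Sx_S$, $x_S=\prod_{i\in S}x_i$. Let $Z=(Z_x)_{x\in\mathbb{F}_2^m}$ have i.i.d. Bernoulli$(\delta)$ entries and let $W=(W_S)_{S\subseteq[m]}$ be the coefficient vector of the multilinear polynomial whose evaluation table is $Z$; $W_r=(W_S)_{|S|=r}$, $W_{>r}=(W_S)_{|S|>r}$. Let $f^{avg}_{m,r}:=H(W_r\mid W_{>r})/\binom{m}{r}$ (base-2 conditional entropy) and $r(m,\epsilon):=\max\{r\in\{0,\dots,m\}: f^{avg}_{m,r}<1-\epsilon\}$. *)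

theory Defs
  imports "HOL-Analysis.Analysis" "HOL-Library.Landau_Symbols"
begin

definition bin_entropy :: "real \<Rightarrow> real" where
  "bin_entropy d = - d * log 2 d - (1 - d) * log 2 (1 - d)"

definition binom_le :: "nat \<Rightarrow> nat \<Rightarrow> nat" where
  "binom_le m r = (\<Sum>i\<le>r. m choose i)"

(* Points of F_2^m are identified with their supports T \<subseteq> {..<m};
   an evaluation table Z : F_2^m \<rightarrow> F_2 is identified with the set z of
   points where Z = 1, so the sample space is Pow (Pow {..<m}). *)
definition points :: "nat \<Rightarrow> nat set set" where
  "points m = Pow {..<m}"

definition sample_space :: "nat \<Rightarrow> nat set set set" where
  "sample_space m = Pow (points m)"

definition zprob :: "real \<Rightarrow> nat \<Rightarrow> nat set set \<Rightarrow> real" where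
  "zprob d m z = d ^ card z * (1 - d) ^ (2 ^ m - card z)"

(* Coefficient vector (as the set of monomials x_S with c_S = 1) of the unique
   multilinear polynomial with evaluation table z: over F_2,
   f(x) = sum_{S \<subseteq> supp x} c_S, hence c_S = sum_{T \<subseteq> S} f(T) (Moebius inversion). *)
definition coeffs :: "nat \<Rightarrow> nat set set \<Rightarrow> nat set set" where
  "coeffs m z = {S \<in> points m. odd (card {T \<in> z. T \<subseteq> S})}"

definition W_eq :: "nat \<Rightarrow> nat \<Rightarrow> nat set set \<Rightarrow> nat set set" where
  "W_eq m r z = {S \<in> coeffs m z. card S = r}"

definition W_gt :: "nat \<Rightarrow> nat \<Rightarrow> nat set set \<Rightarrow> nat set set" where
  "W_gt m r z = {S \<in> coeffs m z. card S > r}"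

definition cond_entropy ::
  "('w \<Rightarrow> real) \<Rightarrow> 'w set \<Rightarrow> ('w \<Rightarrow> 'a) \<Rightarrow> ('w \<Rightarrow> 'b) \<Rightarrow> real" where
  "cond_entropy P \<Omega> X Y =
     - (\<Sum>ab \<in> (\<lambda>w. (X w, Y w)) ` \<Omega>.
          let pxy = (\<Sum>w\<in>{w\<in>\<Omega>. X w = fst ab \<and> Y w = snd ab}. P w);
              py  = (\<Sum>w\<in>{w\<in>\<Omega>. Y w = snd ab}. P w)
          in pxy * log 2 (pxy / py))"

definition f_avg :: "real \<Rightarrow> nat \<Rightarrow> nat \<Rightarrow> real" where
  "f_avg d m r =
     cond_entropy (zprob d m) (sample_space m) (W_eq m r) (W_gt m r) / real (m choose r)"

definition r_max :: "real \<Rightarrow> nat \<Rightarrow> real \<Rightarrow> nat" where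
  "r_max d m eps = Max {r \<in> {0..m}. f_avg d m r < 1 - eps}"

definition r_star :: "real \<Rightarrow> nat \<Rightarrow> real \<Rightarrow> nat" where
  "r_star d m eps =
     (LEAST r. real (binom_le m r) / 2 ^ m \<ge> 1 - bin_entropy d / (1 - eps))"

end

theory Submission
  imports Defs "HOL-Probability.Probability" "HOL-Real_Asymp.Real_Asymp"
begin



lemma bsum0: "(\<Sum>k\<le>N. real (N choose k) * d^k * (1-d)^(N-k)) = (1::real)"
  using binomial_ring[of d "1-d" N] by simp

lemma bsum1: "(\<Sum>k\<le>N. real k * (real (N choose k) * d^k * (1-d)^(N-k))) = real N * (d::real)"
proof (cases N)
  case 0 then show ?thesis by simp
next
  case (Suc M)
  have "(\<Sum>k\<le>Suc M. real k * (real (Suc M choose k) * d^k * (1-d)^(Suc M-k)))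
      = (\<Sum>j\<le>M. real (Suc j) * (real (Suc M choose Suc j) * d^Suc j * (1-d)^(Suc M - Suc j)))"
    by (subst sum.atMost_Suc_shift) simp
  also have "\<dots> = (\<Sum>j\<le>M. (real (Suc M) * d) * (real (M choose j) * d^j * (1-d)^(M - j)))"
  proof (rule sum.cong[OF refl])
    fix j
    have "real (Suc j) * real (Suc M choose Suc j) = real (Suc M) * real (M choose j)"
      using Suc_times_binomial[of j M] by (metis of_nat_mult)
    then show "real (Suc j) * (real (Suc M choose Suc j) * d^Suc j * (1-d)^(Suc M - Suc j)) =
      (real (Suc M) * d) * (real (M choose j) * d^j * (1-d)^(M - j))"
    proof -
      have "real (Suc j) * (real (Suc M choose Suc j) * d^Suc j * (1-d)^(Suc M - Suc j)) =
         (real (Suc j) * real (Suc M choose Suc j)) * d * (d^j * (1-d)^(M - j))"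
        by (simp only: power_Suc diff_Suc_Suc mult_ac)
      also have "\<dots> = (real (Suc M) * d) * (real (M choose j) * d^j * (1-d)^(M - j))"
        by (simp only: \<open>real (Suc j) * real (Suc M choose Suc j) = real (Suc M) * real (M choose j)\<close> mult_ac)
      finally show ?thesis .
    qed
  qed
  also have "\<dots> = real (Suc M) * d"
    by (simp add: sum_distrib_left[symmetric] bsum0)
  finally show ?thesis using Suc by simp
qed

lemma pow_card_sum:
  assumes "finite A"
  shows "(\<Sum>z\<in>Pow A. f (card z)) = (\<Sum>k\<le>card A. real (card A choose k) * (f k :: real))"
proof -
  have "(\<Sum>z\<in>Pow A. f (card z)) = (\<Sum>k\<le>card A. \<Sum>z\<in>{z. z \<in> Pow A \<and> card z = k}. f (card z))"
    using assms by (intro sum.group[symmetric]) (auto intro: card_mono)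
  also have "\<dots> = (\<Sum>k\<le>card A. real (card A choose k) * f k)"
  proof (rule sum.cong[OF refl])
    fix k
    have "(\<Sum>z\<in>{z. z \<in> Pow A \<and> card z = k}. f (card z)) = (\<Sum>z\<in>{z. z \<subseteq> A \<and> card z = k}. f k)"
      by (intro sum.cong) auto
    also have "\<dots> = real (card A choose k) * f k"
      using n_subsets[OF assms, of k] by simp
    finally show "(\<Sum>z\<in>{z. z \<in> Pow A \<and> card z = k}. f (card z)) = real (card A choose k) * f k" .
  qed
  finally show ?thesis .
qed

lemma card_points: "card (points m) = 2 ^ m"
  unfolding points_def by (simp add: card_Pow)

lemma finite_points[simp]: "finite (points m)" unfolding points_def by simp
lemma finite_sample_space[simp]: "finite (sample_space m)" unfolding sample_space_def by simp

lemma zprob_sum: "(\<Sum>z\<in>sample_space m. zprob d m z) = 1"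
proof -
  have "(\<Sum>z\<in>sample_space m. zprob d m z) = (\<Sum>z\<in>Pow (points m). (\<lambda>k. d ^ k * (1 - d) ^ (2^m - k)) (card z))"
    unfolding sample_space_def zprob_def by simp
  also have "\<dots> = 1"
    by (subst pow_card_sum) (simp_all add: card_points mult.assoc bsum0[of "2^m" d, simplified mult.assoc])
  finally show ?thesis .
qed

lemma zprob_pos: "0 < d \<Longrightarrow> d < 1 \<Longrightarrow> zprob d m z > 0"
  unfolding zprob_def by simp

lemma zprob_entropy:
  assumes "0 < d" "d < 1"
  shows "- (\<Sum>z\<in>sample_space m. zprob d m z * log 2 (zprob d m z)) = 2 ^ m * bin_entropy d"
proof -
  let ?N = "2 ^ m :: nat"
  have "(\<Sum>z\<in>sample_space m. zprob d m z * log 2 (zprob d m z)) =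
    (\<Sum>z\<in>Pow (points m). (\<lambda>k. d ^ k * (1 - d) ^ (?N - k) * (real k * log 2 d + real (?N - k) * log 2 (1 - d))) (card z))"
    unfolding sample_space_def zprob_def using assms
    by (intro sum.cong refl) (simp add: log_mult log_nat_power)
  also have "\<dots> = (\<Sum>k\<le>?N. real (?N choose k) * (d ^ k * (1 - d) ^ (?N - k) * (real k * log 2 d + real (?N - k) * log 2 (1 - d))))"
    by (subst pow_card_sum) (auto simp: card_points)
  also have "\<dots> = (\<Sum>k\<le>?N. real k * (real (?N choose k) * d^k * (1-d)^(?N-k)) * (log 2 d - log 2 (1-d))
      + real ?N * log 2 (1-d) * (real (?N choose k) * d^k * (1-d)^(?N-k)))"
    by (rule sum.cong) (auto simp: of_nat_diff algebra_simps)
  also have "\<dots> = (\<Sum>k\<le>?N. real k * (real (?N choose k) * d^k * (1-d)^(?N-k))) * (log 2 d - log 2 (1-d))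
      + real ?N * log 2 (1-d) * (\<Sum>k\<le>?N. real (?N choose k) * d^k * (1-d)^(?N-k))"
    by (simp only: sum.distrib sum_distrib_left sum_distrib_right)
  also have "\<dots> = real ?N * d * (log 2 d - log 2 (1-d)) + real ?N * log 2 (1-d)"
    by (simp only: bsum0 bsum1 mult_1_right)
  finally show ?thesis unfolding bin_entropy_def by (simp add: algebra_simps)
qed




definition pp :: "('w \<Rightarrow> real) \<Rightarrow> 'w set \<Rightarrow> ('w \<Rightarrow> 'a) \<Rightarrow> 'w \<Rightarrow> real" where
  "pp P \<Omega> V w = (\<Sum>w'\<in>{w'\<in>\<Omega>. V w' = V w}. P w')"

lemma pp_pos:
  assumes "finite \<Omega>" "\<And>w. w \<in> \<Omega> \<Longrightarrow> P w > 0" "w \<in> \<Omega>"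
  shows "pp P \<Omega> V w \<ge> P w" "pp P \<Omega> V w > 0"
proof -
  have "P w = (\<Sum>w'\<in>{w}. P w')" by simp
  also have "\<dots> \<le> pp P \<Omega> V w"
    unfolding pp_def using assms by (intro sum_mono2) (auto intro: less_imp_le)
  finally show "pp P \<Omega> V w \<ge> P w" .
  then show "pp P \<Omega> V w > 0" using assms(2)[OF assms(3)] by simp
qed

lemma pp_cong:
  assumes "\<And>w w'. w \<in> \<Omega> \<Longrightarrow> w' \<in> \<Omega> \<Longrightarrow> (V w' = V w \<longleftrightarrow> U w' = U w)" "w \<in> \<Omega>"
  shows "pp P \<Omega> V w = pp P \<Omega> U w"
  unfolding pp_def using assms by (intro sum.cong) auto

lemma pp_const: "pp P \<Omega> (\<lambda>w. c) w = sum P \<Omega>"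
  unfolding pp_def by simp

lemma ce_pointwise:
  assumes fin: "finite \<Omega>" and pos: "\<And>w. w \<in> \<Omega> \<Longrightarrow> P w > 0"
  shows "cond_entropy P \<Omega> X Y =
    - (\<Sum>w\<in>\<Omega>. P w * (log 2 (pp P \<Omega> (\<lambda>w. (X w, Y w)) w) - log 2 (pp P \<Omega> Y w)))"
proof -
  define XY where "XY = (\<lambda>w. (X w, Y w))"
  define Lg where "Lg ab = log 2 ((\<Sum>w\<in>{w\<in>\<Omega>. X w = fst ab \<and> Y w = snd ab}. P w) /
                              (\<Sum>w\<in>{w\<in>\<Omega>. Y w = snd ab}. P w))" for ab
  have "cond_entropy P \<Omega> X Y = - (\<Sum>ab\<in>XY ` \<Omega>. \<Sum>w\<in>{w\<in>\<Omega>. XY w = ab}. P w * Lg ab)"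
    unfolding cond_entropy_def XY_def Lg_def Let_def
    by (intro arg_cong[where f = uminus] sum.cong refl) (auto simp: sum_distrib_right intro!: sum.cong)
  also have "\<dots> = - (\<Sum>ab\<in>XY ` \<Omega>. \<Sum>w\<in>{w\<in>\<Omega>. XY w = ab}. P w * Lg (XY w))"
    by (intro arg_cong[where f = uminus] sum.cong refl) auto
  also have "\<dots> = - (\<Sum>w\<in>\<Omega>. P w * Lg (XY w))"
    using fin by (subst sum.group) auto
  also have "\<dots> = - (\<Sum>w\<in>\<Omega>. P w * (log 2 (pp P \<Omega> XY w) - log 2 (pp P \<Omega> Y w)))"
  proof (intro arg_cong[where f = uminus] sum.cong refl)
    fix w assume w: "w \<in> \<Omega>"
    have "Lg (XY w) = log 2 (pp P \<Omega> XY w / pp P \<Omega> Y w)"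
      unfolding Lg_def pp_def XY_def by simp
    also have "\<dots> = log 2 (pp P \<Omega> XY w) - log 2 (pp P \<Omega> Y w)"
    proof -
      have "pp P \<Omega> XY w > 0" "pp P \<Omega> Y w > 0" using pp_pos(2)[of \<Omega> P w] fin pos w by auto
      then show ?thesis by (simp add: log_divide)
    qed
    finally show "P w * Lg (XY w) = P w * (log 2 (pp P \<Omega> XY w) - log 2 (pp P \<Omega> Y w))" by simp
  qed
  finally show ?thesis unfolding XY_def .
qed




definition Gge :: "nat \<Rightarrow> nat \<Rightarrow> nat set set \<Rightarrow> nat set set" where
  "Gge m r z = {S \<in> coeffs m z. r \<le> card S}"

lemma W_gt_Gge: "W_gt m r = Gge m (Suc r)"
  unfolding W_gt_def Gge_def by (auto simp: Suc_le_eq)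

lemma W_pair_Gge:
  "((W_eq m r z', W_gt m r z') = (W_eq m r z, W_gt m r z)) \<longleftrightarrow> Gge m r z' = Gge m r z"
proof
  assume "(W_eq m r z', W_gt m r z') = (W_eq m r z, W_gt m r z)"
  moreover have "Gge m r x = W_eq m r x \<union> W_gt m r x" for x
    unfolding W_eq_def W_gt_def Gge_def by auto
  ultimately show "Gge m r z' = Gge m r z" by simp
next
  assume "Gge m r z' = Gge m r z"
  moreover have "W_eq m r x = {S \<in> Gge m r x. card S = r}" "W_gt m r x = {S \<in> Gge m r x. card S > r}" for x
    unfolding W_eq_def W_gt_def Gge_def by auto
  ultimately show "(W_eq m r z', W_gt m r z') = (W_eq m r z, W_gt m r z)" by simp
qed

lemma Gge_top: "Gge m (Suc m) = (\<lambda>z. {})"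
proof -
  have "card S \<le> m" if "S \<in> coeffs m z" for S z
  proof -
    have "S \<subseteq> {..<m}" using that unfolding coeffs_def points_def by auto
    then show ?thesis using card_mono[of "{..<m}" S] by simp
  qed
  then show ?thesis unfolding Gge_def by (force simp: fun_eq_iff)
qed

context
  fixes d :: real and m :: nat
  assumes d0: "0 < d" and d1: "d < 1"
begin

abbreviation "PP \<equiv> zprob d m"
abbreviation "\<Omega>\<Omega> \<equiv> sample_space m"
definition LL :: "nat \<Rightarrow> nat set set \<Rightarrow> real" where
  "LL r w = log 2 (pp PP \<Omega>\<Omega> (Gge m r) w)"

lemma pos': "\<And>w. w \<in> \<Omega>\<Omega> \<Longrightarrow> PP w > 0" using zprob_pos d0 d1 by blast

lemma cond_r:
  "cond_entropy PP \<Omega>\<Omega> (W_eq m r) (W_gt m r) = (\<Sum>w\<in>\<Omega>\<Omega>. PP w * (LL (Suc r) w - LL r w))"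
proof -
  have "cond_entropy PP \<Omega>\<Omega> (W_eq m r) (W_gt m r) =
      - (\<Sum>w\<in>\<Omega>\<Omega>. PP w * (log 2 (pp PP \<Omega>\<Omega> (\<lambda>w. (W_eq m r w, W_gt m r w)) w) - log 2 (pp PP \<Omega>\<Omega> (W_gt m r) w)))"
    by (rule ce_pointwise) (auto intro: pos')
  also have "\<dots> = - (\<Sum>w\<in>\<Omega>\<Omega>. PP w * (LL r w - LL (Suc r) w))"
  proof (intro arg_cong[where f = uminus] sum.cong refl)
    fix w assume w: "w \<in> \<Omega>\<Omega>"
    have "pp PP \<Omega>\<Omega> (\<lambda>w. (W_eq m r w, W_gt m r w)) w = pp PP \<Omega>\<Omega> (Gge m r) w"
      by (rule pp_cong[OF _ w]) (rule W_pair_Gge)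
    then show "PP w * (log 2 (pp PP \<Omega>\<Omega> (\<lambda>w. (W_eq m r w, W_gt m r w)) w) - log 2 (pp PP \<Omega>\<Omega> (W_gt m r) w)) =
      PP w * (LL r w - LL (Suc r) w)"
      unfolding LL_def W_gt_Gge by simp
  qed
  also have "\<dots> = (\<Sum>w\<in>\<Omega>\<Omega>. PP w * (LL (Suc r) w - LL r w))"
    by (simp add: sum_negf[symmetric] algebra_simps)
  finally show ?thesis .
qed

lemma LL_top: "LL (Suc m) w = 0"
  unfolding LL_def Gge_top pp_const zprob_sum by simp

lemma LL_ge: "w \<in> \<Omega>\<Omega> \<Longrightarrow> LL r w \<ge> log 2 (PP w)"
proof -
  assume w: "w \<in> \<Omega>\<Omega>"
  have "PP w \<le> pp PP \<Omega>\<Omega> (Gge m r) w" by (rule pp_pos(1)[OF finite_sample_space pos' w])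
  then show ?thesis unfolding LL_def using pos'[OF w] by (subst log_le_cancel_iff) auto
qed

lemma cond_sum_le:
  assumes "r0 \<le> m"
  shows "(\<Sum>r=r0..m. cond_entropy PP \<Omega>\<Omega> (W_eq m r) (W_gt m r)) \<le> 2 ^ m * bin_entropy d"
proof -
  have "(\<Sum>r=r0..m. cond_entropy PP \<Omega>\<Omega> (W_eq m r) (W_gt m r))
     = (\<Sum>w\<in>\<Omega>\<Omega>. PP w * (\<Sum>r=r0..m. LL (Suc r) w - LL r w))"
    by (simp add: cond_r sum_distrib_left sum.swap[of _ "{r0..m}"])
  also have "\<dots> = (\<Sum>w\<in>\<Omega>\<Omega>. PP w * (- LL r0 w))"
  proof (intro sum.cong refl)
    fix x
    have "(\<Sum>r=r0..m. LL (Suc r) x - LL r x) = LL (Suc m) x - LL r0 x"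
      using assms by (intro sum_Suc_diff[of r0 m "\<lambda>i. LL i x"]) simp
    then show "PP x * (\<Sum>r=r0..m. LL (Suc r) x - LL r x) = PP x * (- LL r0 x)" by (simp add: LL_top)
  qed
  also have "\<dots> \<le> (\<Sum>w\<in>\<Omega>\<Omega>. PP w * (- log 2 (PP w)))"
    by (intro sum_mono mult_left_mono) (auto simp: LL_ge less_imp_le[OF pos'])
  also have "\<dots> = 2 ^ m * bin_entropy d"
    using zprob_entropy[OF d0 d1, of m] by (simp add: sum_negf)
  finally show ?thesis .
qed

end




definition mu :: "nat \<Rightarrow> real measure" where
  "mu n = distr (measure_pmf (binomial_pmf n (1/2))) borel (\<lambda>k. (2 * real k - real n) / sqrt (real n))"

lemma mu_real_distribution: "real_distribution (mu n)"
  unfolding mu_def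
  by (intro prob_space.real_distribution_distr prob_space_measure_pmf) auto

lemma char_mu: "char (mu n) t = complex_of_real (cos (t / sqrt (real n)) ^ n)"
proof -
  define s where "s = t / sqrt (real n)"
  have "char (mu n) t = (CLINT k|measure_pmf (binomial_pmf n (1/2)). iexp (t * ((2 * real k - real n) / sqrt (real n))))"
    unfolding char_def mu_def by (subst integral_distr) auto
  also have "\<dots> = (\<Sum>k\<le>n. pmf (binomial_pmf n (1/2)) k *\<^sub>R iexp (t * ((2 * real k - real n) / sqrt (real n))))"
    by (rule integral_measure_pmf) (auto simp: set_pmf_binomial_eq)
  also have "\<dots> = (\<Sum>k\<le>n. (of_nat (n choose k) * iexp s ^ k * iexp (-s) ^ (n - k)) / 2 ^ n)"
  proof (rule sum.cong)
    fix k assume k: "k \<in> {..n}"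
    have e: "t * ((2 * real k - real n) / sqrt (real n)) = real k * s + real (n - k) * (-s)"
      using k by (cases "n = 0") (simp_all add: s_def of_nat_diff field_simps)
    have "iexp (t * ((2 * real k - real n) / sqrt (real n))) = iexp s ^ k * iexp (-s) ^ (n - k)"
    proof -
      have "iexp (real k * s + real (n - k) * (-s)) = exp (of_nat k * (\<i> * s)) * exp (of_nat (n - k) * (\<i> * (-s)))"
        by (simp add: exp_add[symmetric] algebra_simps)
      then show ?thesis unfolding e exp_of_nat_mult by simp
    qed
    moreover have "pmf (binomial_pmf n (1/2)) k = real (n choose k) / 2 ^ n"
      using k by (simp add: pmf_binomial power_add[symmetric] field_simps)
    ultimately show "pmf (binomial_pmf n (1/2)) k *\<^sub>R iexp (t * ((2 * real k - real n) / sqrt (real n))) =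
      (of_nat (n choose k) * iexp s ^ k * iexp (-s) ^ (n - k)) / 2 ^ n"
      by (simp add: scaleR_conv_of_real)
  qed simp
  also have "\<dots> = (iexp s + iexp (-s)) ^ n / 2 ^ n"
    by (simp add: binomial_ring sum_divide_distrib)
  also have "iexp s + iexp (-s) = 2 * complex_of_real (cos s)"
  proof -
    have "iexp s + iexp (-s) = cis s + cis (-s)" by (simp add: cis_conv_exp)
    also have "\<dots> = 2 * complex_of_real (cos s)" by (simp add: complex_eq_iff)
    finally show ?thesis .
  qed
  finally show ?thesis by (simp add: s_def power_mult_distrib)
qed



lemma cos_lim_pos: "t > 0 \<Longrightarrow> (\<lambda>n::nat. cos (t / sqrt (real n)) ^ n) \<longlonglongrightarrow> exp (-(t^2)/2)"
proof -
  assume t: "t > 0"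
  have "(\<lambda>n::nat. exp (real n * ln (cos (t / sqrt (real n))))) \<longlonglongrightarrow> exp (-(t*t/2))"
    using t by real_asymp
  moreover have "eventually (\<lambda>n::nat. exp (real n * ln (cos (t / sqrt (real n)))) = cos (t / sqrt (real n)) ^ n) sequentially"
  proof -
    have "eventually (\<lambda>n::nat. cos (t / sqrt (real n)) > 0) sequentially"
      using t by real_asymp
    then show ?thesis
      by eventually_elim (simp add: exp_of_nat_mult[symmetric] ln_realpow[symmetric])
  qed
  ultimately show ?thesis
    by (simp add: power2_eq_square) (rule Lim_transform_eventually)
qed

lemma cos_lim: "(\<lambda>n::nat. cos (t / sqrt (real n)) ^ n) \<longlonglongrightarrow> exp (-(t^2)/2)"
proof -
  consider "t > 0" | "t = 0" | "t < 0" by linarith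
  then show ?thesis
  proof cases
    case 3
    have "(\<lambda>n::nat. cos ((-t) / sqrt (real n)) ^ n) \<longlonglongrightarrow> exp (-((-t)^2)/2)"
      using 3 by (intro cos_lim_pos) simp
    then show ?thesis by simp
  next
    case 1 then show ?thesis by (rule cos_lim_pos)
  qed simp
qed



lemma weak_mu: "weak_conv_m mu std_normal_distribution"
proof (rule levy_continuity)
  fix t
  show "(\<lambda>n. char (mu n) t) \<longlonglongrightarrow> char std_normal_distribution t"
    unfolding char_mu char_std_normal_distribution by (rule tendsto_of_real[OF cos_lim])
qed (auto simp: mu_real_distribution real_dist_normal_dist)

definition Phi :: "real \<Rightarrow> real" where "Phi = cdf std_normal_distribution"

lemma Phi_cont: "isCont Phi x"
proof -
  interpret real_distribution std_normal_distribution by (rule real_dist_normal_dist)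
  have "emeasure std_normal_distribution {x} = 0"
        by (subst emeasure_density) auto
  then show ?thesis unfolding Phi_def isCont_cdf by (simp add: measure_def)
qed

lemma Phi_conv: "(\<lambda>n. cdf (mu n) x) \<longlonglongrightarrow> Phi x"
  using weak_mu Phi_cont unfolding weak_conv_m_def weak_conv_def Phi_def by auto

lemma Phi_strict: assumes "a < b" shows "Phi a < Phi b"
proof -
  interpret real_distribution std_normal_distribution by (rule real_dist_normal_dist)
  have "emeasure std_normal_distribution {a<..b} \<noteq> 0"
  proof
    assume "emeasure std_normal_distribution {a<..b} = 0"
    then have "(\<integral>\<^sup>+x. ennreal (std_normal_density x) * indicator {a<..b} x \<partial>lborel) = 0"
      by (subst (asm) emeasure_density) auto
    then have "AE x in lborel. ennreal (std_normal_density x) * indicator {a<..b} x = 0"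
      by (subst (asm) nn_integral_0_iff_AE) auto
    then have "AE x in lborel. x \<notin> {a<..b}"
      by eventually_elim (auto simp: std_normal_density_def split: split_indicator)
    then have "emeasure lborel {x. a < x \<and> x \<le> b} = 0"
      by (subst (asm) AE_iff_measurable[OF _ refl]) auto
    moreover have "{x. a < x \<and> x \<le> b} = {a<..b}" by auto
    ultimately show False using assms by simp
  qed
  then have "measure std_normal_distribution {a<..b} > 0"
    by (simp add: emeasure_eq_measure zero_less_measure_iff)
  then show ?thesis using cdf_diff_eq[OF assms] unfolding Phi_def by simp
qed

lemma Phi_surj: assumes "0 < t" "t < 1" shows "\<exists>y. Phi y = t"
proof -
  interpret real_distribution std_normal_distribution by (rule real_dist_normal_dist)
  have "eventually (\<lambda>x. Phi x < t) at_bot"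
    using cdf_lim_at_bot assms unfolding Phi_def by (auto intro: order_tendstoD)
  then obtain a where a: "Phi a < t" by (auto simp: eventually_at_bot_linorder)
  have "eventually (\<lambda>x. Phi x > t) at_top"
    using cdf_lim_at_top_prob assms unfolding Phi_def by (auto intro: order_tendstoD)
  then obtain b where b: "Phi b > t" by (auto simp: eventually_at_top_linorder)
  have "a \<le> b"
  proof (rule ccontr)
    assume "\<not> a \<le> b" then have "Phi b < Phi a" by (intro Phi_strict) auto
    with a b show False by simp
  qed
  then show ?thesis using IVT[of Phi a t b] a b Phi_cont by auto
qed




definition Sb :: "nat \<Rightarrow> real \<Rightarrow> nat" where
  "Sb n a = (\<Sum>k\<in>{k. k \<le> n \<and> real k \<le> a}. n choose k)"

lemma cdf_mu: assumes "n \<ge> 1"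
  shows "cdf (mu n) x = real (Sb n ((real n + x * sqrt (real n)) / 2)) / 2 ^ n"
proof -
  let ?B = "binomial_pmf n (1/2)"
  let ?A = "{k. (2 * real k - real n) / sqrt (real n) \<le> x}"
  have sq: "sqrt (real n) > 0" using assms by simp
  have "cdf (mu n) x = measure_pmf.prob ?B ?A"
    unfolding cdf_def mu_def by (subst measure_distr) (auto simp: vimage_def)
  also have "\<dots> = measure_pmf.prob ?B (?A \<inter> set_pmf ?B)"
    by (rule measure_Int_set_pmf[symmetric])
  also have "?A \<inter> set_pmf ?B = {k. k \<le> n \<and> real k \<le> (real n + x * sqrt (real n)) / 2}"
    using sq by (auto simp: set_pmf_binomial_eq divide_le_eq field_simps)
  also have "measure_pmf.prob ?B \<dots> = (\<Sum>k\<in>{k. k \<le> n \<and> real k \<le> (real n + x * sqrt (real n)) / 2}. pmf ?B k)"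
    by (rule measure_measure_pmf_finite) auto
  also have "\<dots> = (\<Sum>k\<in>{k. k \<le> n \<and> real k \<le> (real n + x * sqrt (real n)) / 2}. real (n choose k) / 2 ^ n)"
    by (intro sum.cong refl) (auto simp: pmf_binomial power_add[symmetric] field_simps)
  finally show ?thesis by (simp add: Sb_def sum_divide_distrib)
qed

lemma binom_le_alt: "binom_le n j = (\<Sum>k\<in>{k. k \<le> n \<and> k \<le> j}. n choose k)"
  unfolding binom_le_def
  by (rule sum.mono_neutral_right) auto

lemma le_nat_floor_iff: "(a::real) \<ge> 0 \<Longrightarrow> x \<le> nat \<lfloor>a\<rfloor> \<longleftrightarrow> real x \<le> a"
  by (simp add: le_nat_iff le_floor_iff)

lemma binom_le_Sb: assumes "a \<ge> 0" shows "binom_le n (nat \<lfloor>a\<rfloor>) = Sb n a"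
  unfolding binom_le_alt Sb_def using assms
  by (intro sum.cong refl) (auto simp: le_nat_floor_iff)

lemma binom_le_le_Sb: assumes "real j \<le> a" shows "binom_le n j \<le> Sb n a"
  unfolding binom_le_alt Sb_def using assms
  by (intro sum_mono2) auto

lemma Sb_neg: "a < 0 \<Longrightarrow> Sb n a = 0"
  unfolding Sb_def by (auto intro!: sum.neutral)




lemma bin_entropy_pos: "0 < d \<Longrightarrow> d < 1/2 \<Longrightarrow> bin_entropy d > 0"
proof -
  assume d: "0 < d" "d < 1/2"
  have "log 2 d < 0" "log 2 (1 - d) < 0" using d by auto
  then have "- d * log 2 d > 0" "- (1 - d) * log 2 (1 - d) > 0" using d
    by (auto simp: mult_pos_neg mult_neg_neg)
  then show ?thesis unfolding bin_entropy_def by linarith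
qed

lemma binom_le_top: "binom_le m m = 2 ^ m"
  unfolding binom_le_def by (rule choose_row_sum)

theorem corollary7p2:
  fixes d eps :: real
  assumes "0 < d" and "d < 1/2"
    and "0 < eps" and "eps < 1 - bin_entropy d"
  shows "(\<forall>m::nat. m \<ge> 1 \<longrightarrow> r_star d m eps \<le> r_max d m eps)
    \<and> (\<lambda>m. real (binom_le m (r_star d m eps)) / 2 ^ m)
        \<longlonglongrightarrow> 1 - bin_entropy d / (1 - eps)
    \<and> (\<exists>C::real. (\<lambda>m::nat. real (r_star d m eps) - real m / 2 - C * sqrt (real m))
                     \<in> o(\<lambda>m. sqrt (real m)))"
proof -
  define h where "h = bin_entropy d"
  define t where "t = 1 - h / (1 - eps)"
  have h0: "h > 0" unfolding h_def using assms bin_entropy_pos by auto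
  have e1: "1 - eps > 0" using assms h0 unfolding h_def by linarith
  have t0: "t > 0" unfolding t_def using assms e1 by (simp add: h_def field_simps)
  have t1: "t < 1" unfolding t_def using h0 e1 by simp
  have ht: "(1 - eps) * (1 - t) = h" unfolding t_def using e1 by (simp add: field_simps)
  define rs where "rs m = r_star d m eps" for m
  have rs_def': "rs m = (LEAST r. real (binom_le m r) / 2 ^ m \<ge> t)" for m
    unfolding rs_def r_star_def t_def h_def ..
  have top: "real (binom_le m m) / 2 ^ m \<ge> t" for m
    using t1 by (simp add: binom_le_top)
  have rsI: "real (binom_le m (rs m)) / 2 ^ m \<ge> t" for m
    unfolding rs_def' by (rule LeastI[where P = "\<lambda>r. real (binom_le m r) / 2 ^ m \<ge> t", OF top])
  have rs_le: "real (binom_le m r) / 2 ^ m \<ge> t \<Longrightarrow> rs m \<le> r" for m r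
    unfolding rs_def' by (rule Least_le)
  have rs_less: "j < rs m \<Longrightarrow> real (binom_le m j) / 2 ^ m < t" for m j
    unfolding rs_def' using not_less_Least by fastforce
  have rs_m: "rs m \<le> m" for m by (rule rs_le[OF top[of m]])

  have part1: "rs m \<le> r_max d m eps" for m
  proof -
    let ?cond = "\<lambda>r. cond_entropy (zprob d m) (sample_space m) (W_eq m r) (W_gt m r)"
    have "\<exists>r\<in>{rs m..m}. f_avg d m r < 1 - eps"
    proof (rule ccontr)
      assume "\<not> ?thesis"
      then have ge: "?cond r \<ge> (1 - eps) * real (m choose r)" if "r \<in> {rs m..m}" for r
        using that by (auto simp: f_avg_def not_less le_divide_eq)
      have split: "(\<Sum>r\<le>m. real (m choose r)) = (\<Sum>r<rs m. real (m choose r)) + (\<Sum>r=rs m..m. real (m choose r))"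
      proof -
        have "{..m} = {..<rs m} \<union> {rs m..m}" using rs_m[of m] by auto
        then show ?thesis by (simp add: sum.union_disjoint ivl_disj_int)
      qed
      have low: "(\<Sum>r<rs m. real (m choose r)) < t * 2 ^ m"
      proof (cases "rs m")
        case 0 then show ?thesis using t0 by simp
      next
        case (Suc j)
        have "(\<Sum>r<rs m. real (m choose r)) = real (binom_le m j)"
          unfolding Suc binom_le_def lessThan_Suc_atMost by simp
        also have "\<dots> < t * 2 ^ m" using rs_less[of j m] Suc by (simp add: divide_less_eq)
        finally show ?thesis .
      qed
      have "(\<Sum>r\<le>m. real (m choose r)) = 2 ^ m"
        using choose_row_sum[of m] by (metis of_nat_numeral of_nat_power of_nat_sum)
      then have big: "(\<Sum>r=rs m..m. real (m choose r)) > (1 - t) * 2 ^ m"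
        using split low by (simp add: algebra_simps)
      have "2 ^ m * h = (1 - eps) * ((1 - t) * 2 ^ m)" unfolding ht[symmetric] by (simp only: mult_ac)
      also have "\<dots> < (1 - eps) * (\<Sum>r=rs m..m. real (m choose r))"
        using big e1 by simp
      also have "\<dots> = (\<Sum>r=rs m..m. (1 - eps) * real (m choose r))"
        by (simp add: sum_distrib_left)
      also have "\<dots> \<le> (\<Sum>r=rs m..m. ?cond r)"
        by (rule sum_mono) (rule ge)
      also have "\<dots> \<le> 2 ^ m * h"
        unfolding h_def using assms by (intro cond_sum_le rs_m) auto
      finally show False by simp
    qed
    then obtain r where r: "r \<in> {rs m..m}" "f_avg d m r < 1 - eps" by blast
    have "r \<le> r_max d m eps"
      unfolding r_max_def using r by (intro Max_ge) auto
    then show ?thesis using r by simp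
  qed

  obtain y0 where y0: "Phi y0 = t" using Phi_surj[OF t0 t1] by blast
  define a where "a m y = (real m + y * sqrt (real m)) / 2" for m y

  have U: "eventually (\<lambda>m. real (rs m) \<le> a m (y0 + e) \<and> cdf (mu m) (y0 + e) = real (Sb m (a m (y0 + e))) / 2 ^ m
      \<and> binom_le m (rs m) \<le> Sb m (a m (y0 + e))) sequentially" if e: "e > 0" for e
  proof -
    have "Phi (y0 + e) > t" using Phi_strict[of y0 "y0 + e"] e y0 by simp
    then have ev: "eventually (\<lambda>m. cdf (mu m) (y0 + e) > t) sequentially"
      by (rule order_tendstoD(1)[OF Phi_conv])
    show ?thesis
      using ev eventually_ge_at_top[of "1::nat"]
    proof eventually_elim
      case (elim m)
      let ?a = "a m (y0 + e)"
      have cdf: "cdf (mu m) (y0 + e) = real (Sb m ?a) / 2 ^ m"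
        using cdf_mu[OF elim(2)] unfolding a_def by simp
      have "?a \<ge> 0"
      proof (rule ccontr)
        assume "\<not> ?a \<ge> 0" then have "Sb m ?a = 0" by (intro Sb_neg) simp
        then show False using elim(1) cdf t0 by simp
      qed
      then have eq: "binom_le m (nat \<lfloor>?a\<rfloor>) = Sb m ?a" by (rule binom_le_Sb)
      have "rs m \<le> nat \<lfloor>?a\<rfloor>"
        using elim(1) cdf eq by (intro rs_le) simp
      then have "real (rs m) \<le> ?a" using le_nat_floor_iff[OF \<open>?a \<ge> 0\<close>] by simp
      then show ?case using cdf binom_le_le_Sb by auto
    qed
  qed

  have Lo: "eventually (\<lambda>m. real (rs m) > a m (y0 - e)) sequentially" if e: "e > 0" for e
  proof -
    have "Phi (y0 - e) < t" using Phi_strict[of "y0 - e" y0] e y0 by simp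
    then have ev: "eventually (\<lambda>m. cdf (mu m) (y0 - e) < t) sequentially"
      by (rule order_tendstoD(2)[OF Phi_conv])
    show ?thesis
      using ev eventually_ge_at_top[of "1::nat"]
    proof eventually_elim
      case (elim m)
      let ?a = "a m (y0 - e)"
      have cdf: "cdf (mu m) (y0 - e) = real (Sb m ?a) / 2 ^ m"
        using cdf_mu[OF elim(2)] unfolding a_def by simp
      show ?case
      proof (rule ccontr)
        assume "\<not> real (rs m) > ?a"
        then have "binom_le m (rs m) \<le> Sb m ?a" by (intro binom_le_le_Sb) simp
        then have "real (binom_le m (rs m)) / 2 ^ m \<le> cdf (mu m) (y0 - e)"
          unfolding cdf by (simp add: divide_right_mono)
        then show False using rsI[of m] elim(1) by simp
      qed
    qed
  qed

  have part2: "(\<lambda>m. real (binom_le m (rs m)) / 2 ^ m) \<longlonglongrightarrow> t"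
  proof (rule order_tendstoI)
    fix l assume "l < t"
    then show "eventually (\<lambda>m. l < real (binom_le m (rs m)) / 2 ^ m) sequentially"
      using rsI by (intro always_eventually allI) (auto intro: less_le_trans)
  next
    fix u assume u: "t < u"
    obtain s where s: "s > 0" "\<And>x. x \<noteq> y0 \<and> dist x y0 < s \<longrightarrow> dist (Phi x) (Phi y0) < u - t"
      using metric_LIM_D[OF Phi_cont[of y0, unfolded isCont_def], of "u - t"] u by auto
    define e where "e = s / 2"
    have e: "e > 0" using s by (simp add: e_def)
    have "dist (Phi (y0 + e)) (Phi y0) < u - t" using s e by (auto simp: e_def dist_real_def)
    then have "Phi (y0 + e) < u" using y0 by (simp add: dist_real_def)
    then have "eventually (\<lambda>m. cdf (mu m) (y0 + e) < u) sequentially"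
      by (rule order_tendstoD(2)[OF Phi_conv])
    then show "eventually (\<lambda>m. real (binom_le m (rs m)) / 2 ^ m < u) sequentially"
      using U[OF e]
    proof eventually_elim
      case (elim m)
      then have "real (binom_le m (rs m)) / 2 ^ m \<le> cdf (mu m) (y0 + e)"
        by (simp add: divide_right_mono)
      then show ?case using elim by simp
    qed
  qed

  have part3: "(\<lambda>m::nat. real (rs m) - real m / 2 - (y0 / 2) * sqrt (real m)) \<in> o(\<lambda>m. sqrt (real m))"
  proof (rule landau_o.smallI)
    fix c :: real assume c: "c > 0"
    then have c2: "2 * c > 0" by simp
    show "eventually (\<lambda>m. norm (real (rs m) - real m / 2 - (y0 / 2) * sqrt (real m)) \<le> c * norm (sqrt (real m))) sequentially"
      using U[OF c2] Lo[OF c2]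
    proof eventually_elim
      case (elim m)
      then show ?case by (auto simp: a_def abs_le_iff algebra_simps)
    qed
  qed

  show ?thesis
    using part1 part2 part3 unfolding rs_def t_def h_def by blast
qed



end
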